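(* Let $k\ge2$ and let $G=(\{a,b\},\varphi,a)$ be a circular D0L-system with $\varphi$ $k$-uniform. Then the graph of overhangs $GO_G$ does not contain two distinct vertices $s_1,s_2$ with an edge from $s_1$ to $s_2$, an edge from $s_2$ to $s_1$, and a loop on $s_1$ or on $s_2$.
   Context: A D0L-system $G=(\mathcal{A},\varphi,w)$ has $L(G)=\{\varphi^n(w)\}$ and $S(L(G))$ the set of factors of its words. An interpretation of $u\in S(L(G))$ is $(p,v,s)$ with $v\in S(L(G))$, $\varphi(v)=pus$. With $v=v_1\cdots v_n$, $v'=v'_1\cdots v'_m$, $u=u_1\cdots u_\ell$, interpretations $(p,v,s),(p',v',s')$ are synchronized at position $j$ if $\varphi(v_1\cdots v_i)=pu_1\cdots u_j$ and $\varphi(v'_1\cdots v'_{i'})=p'u_1\cdots u_j$ for some $i,i'$; $u$ has a synchronizing point at $j$ if all its interpretations are pairwise synchronized at $j$. A PD0L-system injective on $S(L(G))$ is circular if there is $Z$ such that every $u\in S(L(G))$ with $|u|>Z$ has a synchronizing point. $\varphi$ is $k$-uniform if $|\varphi(a)|=|\varphi(b)|=k$. Let $X=\{\varphi(a),\varphi(b)\}$. An overhang is a triple $(u_1\cdots u_m,v_1\cdots v_n,|x|)$ with $u_i,v_j\in X$, $x$ nonempty, such that: (i) $x$ is a suffix of $u_1\cdots u_m$ but not of $u_2\cdots u_m$; (ii) $x$ is a prefix of $v_1\cdots v_n$ but not of $v_1\cdots v_{n-1}$; (iii) $x\ne u_1\cdots u_m$ or $x\ne v_1\cdots v_n$; (iv)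 $|v_1\cdots v_{n-1}|<|x(u_2\cdots u_m)^{-1}|$. Its left overhang is $u_1\cdots u_mx^{-1}$, right overhang $x^{-1}v_1\cdots v_n$. $GO_G$ has an edge from $s_1$ to $s_2$ labelled by each overhang with left overhang $s_1$ and right overhang $s_2$. *)

theory Defs
  imports Main "HOL-Library.Sublist"
begin

datatype letter = LA | LB

type_synonym word = "letter list"

definition morph :: "(letter \<Rightarrow> word) \<Rightarrow> word \<Rightarrow> word" where
  "morph \<phi> w = concat (map \<phi> w)"

definition D0L_lang :: "(letter \<Rightarrow> word) \<Rightarrow> word \<Rightarrow> word set" where
  "D0L_lang \<phi> w = {(morph \<phi> ^^ n) w | n. True}"

definition factors :: "word set \<Rightarrow> word set" where
  "factors L = {u. \<exists>z\<in>L. \<exists>p s. z = p @ u @ s}"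

definition is_interp :: "(letter \<Rightarrow> word) \<Rightarrow> word \<Rightarrow> word \<Rightarrow> word \<times> word \<times> word \<Rightarrow> bool" where
  "is_interp \<phi> w u I = (case I of (p, v, s) \<Rightarrow>
      v \<in> factors (D0L_lang \<phi> w) \<and> morph \<phi> v = p @ u @ s)"

definition synchronized_at :: "(letter \<Rightarrow> word) \<Rightarrow> word \<Rightarrow> word \<times> word \<times> word \<Rightarrow> word \<times> word \<times> word \<Rightarrow> nat \<Rightarrow> bool" where
  "synchronized_at \<phi> u I I' j = (case I of (p, v, s) \<Rightarrow> case I' of (p', v', s') \<Rightarrow>
      (\<exists>i \<le> length v. \<exists>i' \<le> length v'.
          morph \<phi> (take i v) = p @ take j u \<and> morph \<phi> (take i' v') = p' @ take j u))"

definition has_sync_point_at :: "(letter \<Rightarrow> word) \<Rightarrow> word \<Rightarrow> word \<Rightarrow> nat \<Rightarrow> bool" where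
  "has_sync_point_at \<phi> w u j = (j \<le> length u \<and>
      (\<forall>I I'. is_interp \<phi> w u I \<longrightarrow> is_interp \<phi> w u I' \<longrightarrow> synchronized_at \<phi> u I I' j))"

definition has_sync_point :: "(letter \<Rightarrow> word) \<Rightarrow> word \<Rightarrow> word \<Rightarrow> bool" where
  "has_sync_point \<phi> w u = (\<exists>j. has_sync_point_at \<phi> w u j)"

definition circular :: "(letter \<Rightarrow> word) \<Rightarrow> word \<Rightarrow> bool" where
  "circular \<phi> w = ((\<forall>c. \<phi> c \<noteq> []) \<and> inj_on (morph \<phi>) (factors (D0L_lang \<phi> w)) \<and>
      (\<exists>Z. \<forall>u \<in> factors (D0L_lang \<phi> w). length u > Z \<longrightarrow> has_sync_point \<phi> w u))"

definition uniform :: "(letter \<Rightarrow> word) \<Rightarrow> nat \<Rightarrow> bool" where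
  "uniform \<phi> k = (length (\<phi> LA) = k \<and> length (\<phi> LB) = k)"

text \<open>Overhang (us, vs, l), where us = [u_1,...,u_m], vs = [v_1,...,v_n] are lists of
  blocks from X = {phi a, phi b} and l = |x|.\<close>
definition overhang :: "(letter \<Rightarrow> word) \<Rightarrow> word list \<Rightarrow> word list \<Rightarrow> nat \<Rightarrow> bool" where
  "overhang \<phi> us vs l = (set us \<subseteq> {\<phi> LA, \<phi> LB} \<and> set vs \<subseteq> {\<phi> LA, \<phi> LB} \<and>
     (\<exists>x. l = length x \<and> x \<noteq> [] \<and>
        suffix x (concat us) \<and> \<not> suffix x (concat (tl us)) \<and>
        prefix x (concat vs) \<and> \<not> prefix x (concat (butlast vs)) \<and>
        (x \<noteq> concat us \<or> x \<noteq> concat vs) \<and>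
        length (concat (butlast vs)) < length x - length (concat (tl us))))"

definition left_overhang :: "word list \<Rightarrow> nat \<Rightarrow> word" where
  "left_overhang us l = take (length (concat us) - l) (concat us)"

definition right_overhang :: "word list \<Rightarrow> nat \<Rightarrow> word" where
  "right_overhang vs l = drop l (concat vs)"

definition GO_edge :: "(letter \<Rightarrow> word) \<Rightarrow> word \<Rightarrow> word \<Rightarrow> bool" where
  "GO_edge \<phi> s1 s2 = (\<exists>us vs l. overhang \<phi> us vs l \<and>
      left_overhang us l = s1 \<and> right_overhang vs l = s2)"

end

theory Submission
  imports Defs
begin

lemma len_concat_unif:
  "(\<forall>w\<in>set ws. length w = k) \<Longrightarrow> length (concat ws) = k * length ws"
  by (induction ws) auto

lemma suffix_longer:
  assumes "suffix x (a @ b)" "\<not> suffix x b"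
  shows "length x > length b"
  using suffix_length_suffix[OF assms(1), of b] assms(2) by (force intro: suffix_appendI)

lemma prefix_longer:
  assumes "prefix x (a @ b)" "\<not> prefix x a"
  shows "length x > length a"
  using prefix_length_prefix[OF assms(1), of a] assms(2) by force

lemma edge_char:
  assumes u: "uniform \<phi> k" and e: "GO_edge \<phi> s1 s2"
  shows "\<exists>x u v. u \<in> {\<phi> LA, \<phi> LB} \<and> v \<in> {\<phi> LA, \<phi> LB} \<and> x \<noteq> [] \<and>
           u = s1 @ x \<and> v = x @ s2"
proof -
  obtain us vs l where ov: "overhang \<phi> us vs l" and lo: "left_overhang us l = s1"
    and ro: "right_overhang vs l = s2" using e unfolding GO_edge_def by blast
  from ov obtain x where Us: "set us \<subseteq> {\<phi> LA, \<phi> LB}" and Vs: "set vs \<subseteq> {\<phi> LA, \<phi> LB}"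
    and l: "l = length x" and xne: "x \<noteq> []" and s1: "suffix x (concat us)"
    and s2: "\<not> suffix x (concat (tl us))" and p1: "prefix x (concat vs)"
    and p2: "\<not> prefix x (concat (butlast vs))"
    and ineq: "length (concat (butlast vs)) < length x - length (concat (tl us))"
    unfolding overhang_def by blast
  have lk: "length (\<phi> LA) = k" "length (\<phi> LB) = k" using u unfolding uniform_def by auto
  have U: "\<forall>w\<in>set us. length w = k" using Us lk by auto
  have V: "\<forall>w\<in>set vs. length w = k" using Vs lk by auto
  have "us \<noteq> []" using s1 xne by (auto simp: suffix_def)
  then obtain u us' where us: "us = u # us'" by (cases us) auto
  have "vs \<noteq> []" using p1 xne by (auto simp: prefix_def)
  then obtain vs' v where vs: "vs = vs' @ [v]" by (cases vs rule: rev_cases) auto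
  have lu: "length u = k" using U us by auto
  have lv: "length v = k" using V vs by auto
  have lus': "length (concat us') = k * length us'" using U us len_concat_unif by auto
  have lvs': "length (concat vs') = k * length vs'" using V vs len_concat_unif by auto
  have g1: "length x > length (concat us')" using suffix_longer[of x u "concat us'"] s1 s2 us by simp
  have g2: "length x > length (concat vs')" using prefix_longer[of x "concat vs'" v] p1 p2 vs by simp
  have lx: "length x \<le> length (concat us)" using s1 by (rule suffix_length_le)
  have "length x - length (concat us') \<le> k" using lx us lu by simp
  moreover have "length (concat (butlast vs)) = k * length vs'" using vs lvs' by simp
  moreover have "length (concat (tl us)) = length (concat us')" using us by simp
  ultimately have "k * length vs' < k" using ineq by linarith
  then have "length vs' = 0" by (cases "length vs'") auto
  then have vs'0: "vs' = []" by simp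
  have "length x \<le> k" using p1 vs vs'0 lv using prefix_length_le by fastforce
  with g1 lus' have "k * length us' < k" by linarith
  then have "length us' = 0" by (cases "length us'") auto
  then have us'0: "us' = []" by simp
  have usu: "us = [u]" and vsv: "vs = [v]" using us us'0 vs vs'0 by auto
  have A: "u = s1 @ x" using lo s1 usu l unfolding left_overhang_def suffix_def by auto
  have B: "v = x @ s2" using ro p1 vsv l unfolding right_overhang_def prefix_def by auto
  have "u \<in> {\<phi> LA, \<phi> LB}" "v \<in> {\<phi> LA, \<phi> LB}" using Us Vs usu vsv by auto
  with A B xne show ?thesis by blast
qed

lemma comm_pow:
  assumes "u @ w = w @ u"
  shows "u @ concat (replicate n w) = concat (replicate n w) @ u"
proof (induction n)
  case 0 then show ?case by simp
next
  case (Suc n)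
  have "u @ concat (replicate (Suc n) w) = (u @ w) @ concat (replicate n w)" by simp
  also have "\<dots> = w @ (u @ concat (replicate n w))" using assms by simp
  also have "\<dots> = concat (replicate (Suc n) w) @ u" using Suc by simp
  finally show ?case .
qed

lemma comm_unique:
  assumes "u @ w = w @ u" "v @ w = w @ v" "w \<noteq> []" "length u = length v"
  shows "u = v"
proof -
  let ?W = "concat (replicate (length u) w)"
  have lW: "length ?W \<ge> length u"
  proof -
    have "length ?W = length u * length w" by (simp add: length_concat sum_list_replicate)
    moreover have "length w \<ge> 1" using assms(3) by (cases w) auto
    ultimately show ?thesis by simp
  qed
  have "u = take (length u) ?W"
    using arg_cong[OF comm_pow[OF assms(1), of "length u"], of "take (length u)"] lW by simp
  moreover have "v = take (length u) ?W"
    using arg_cong[OF comm_pow[OF assms(2), of "length u"], of "take (length u)"] lW assms(4) by simp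
  ultimately show ?thesis by simp
qed

lemma conj2:
  assumes "s @ x = x @ t" "t @ x = x @ s"
  shows "s @ (x @ x) = (x @ x) @ s"
proof -
  have "s @ (x @ x) = (s @ x) @ x" by simp
  also have "\<dots> = (x @ t) @ x" by (simp only: assms(1))
  also have "\<dots> = x @ (t @ x)" by simp
  also have "\<dots> = x @ (x @ s)" by (simp only: assms(2))
  finally show ?thesis by simp
qed

lemma key:
  assumes u: "uniform \<phi> k" and ne: "s1 \<noteq> s2"
    and e1: "GO_edge \<phi> s1 s2" and e2: "GO_edge \<phi> s2 s1" and e3: "GO_edge \<phi> s1 s1"
  shows False
proof -
  have lk: "length (\<phi> LA) = k" "length (\<phi> LB) = k" using u unfolding uniform_def by auto
  obtain x u1 v1 where E1: "u1 \<in> {\<phi> LA, \<phi> LB}" "v1 \<in> {\<phi> LA, \<phi> LB}" "x \<noteq> []"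
    "u1 = s1 @ x" "v1 = x @ s2" using edge_char[OF u e1] by blast
  obtain y u2 v2 where E2: "u2 \<in> {\<phi> LA, \<phi> LB}" "v2 \<in> {\<phi> LA, \<phi> LB}" "y \<noteq> []"
    "u2 = s2 @ y" "v2 = y @ s1" using edge_char[OF u e2] by blast
  obtain z u3 v3 where E3: "u3 \<in> {\<phi> LA, \<phi> LB}" "v3 \<in> {\<phi> LA, \<phi> LB}" "z \<noteq> []"
    "u3 = s1 @ z" "v3 = z @ s1" using edge_char[OF u e3] by blast
  have Lx: "\<And>w. w \<in> {\<phi> LA, \<phi> LB} \<Longrightarrow> length w = k" using lk by auto
  have a1: "length s1 + length x = k" using Lx[OF E1(1)] E1(4) by simp
  have a2: "length x + length s2 = k" using Lx[OF E1(2)] E1(5) by simp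
  have a3: "length s2 + length y = k" using Lx[OF E2(1)] E2(4) by simp
  have a4: "length s1 + length z = k" using Lx[OF E3(1)] E3(4) by simp
  have ls: "length s1 = length s2" "length x = length y" "length z = length x"
    using a1 a2 a3 a4 by linarith+
  have u12: "u1 \<noteq> u2" using E1(4) E2(4) ls ne by auto
  have v12: "v1 \<noteq> v2" using E1(5) E2(5) ls ne by auto
  have "u3 \<noteq> u2" using E3(4) E2(4) ls ne by auto
  then have "u3 = u1" using E1(1) E2(1) E3(1) u12 by auto
  then have zx: "z = x" using E3(4) E1(4) by simp
  have "v3 \<noteq> v1" using E3(5) E1(5) ls ne zx by auto
  then have "v3 = v2" using E1(2) E2(2) E3(2) v12 by auto
  then have yx: "y = x" using E3(5) E2(5) zx ls by simp
  have "(u1 = v1 \<and> u2 = v2) \<or> (u1 = v2 \<and> u2 = v1)"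
    using E1(1,2) E2(1,2) u12 v12 by auto
  then have "s1 @ (x @ x) = (x @ x) @ s1 \<and> s2 @ (x @ x) = (x @ x) @ s2"
    using conj2[of s1 x s2] conj2[of s2 x s1] conj2[of s1 x s1] conj2[of s2 x s2] E1 E2 yx by auto
  then have "s1 = s2" using comm_unique[of s1 "x @ x" s2] E1(3) ls by auto
  with ne show False by simp
qed

theorem mainTheorem7:
  fixes \<phi> :: "letter \<Rightarrow> word" and k :: nat
  assumes "k \<ge> 2"
    and "circular \<phi> [LA]"
    and "uniform \<phi> k"
  shows "\<not> (\<exists>s1 s2. s1 \<noteq> s2 \<and> GO_edge \<phi> s1 s2 \<and> GO_edge \<phi> s2 s1 \<and>
                 (GO_edge \<phi> s1 s1 \<or> GO_edge \<phi> s2 s2))"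
  using key[OF assms(3)] by metis

end
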